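(* Let $\sigma\in\mathfrak{S}_n$ and $P=\Psi_n(\sigma)$. Let $1\leq i<j\leq n$. Then the letter $i$ is immediately followed by the letter $j$ in the word $\sigma(1)\sigma(2)\cdots\sigma(n)$ if and only if the three following conditions hold: (a) $i<_h j$ in $P$; (b) for all $x\in P$, if $x<_h j$ in $P$ then $x\leq_h i$ or $x\geq_r i$; (c) for all $x\in P$, if $x>_h i$ in $P$ then $x\geq_h j$ or $x\leq_r j$.
   Context: For $\sigma\in\mathfrak{S}_n$, $\Psi_n(\sigma)=P_\sigma$ is the double poset on $\{1,\ldots,n\}$ with $i\leq_h j$ iff ($i\leq j$ and $\sigma^{-1}(i)\leq\sigma^{-1}(j)$), and $i\leq_r j$ iff ($i\leq j$ and $\sigma^{-1}(i)\geq\sigma^{-1}(j)$). (It is a plane poset: two distinct elements are $\leq_h$-comparable iff they are not $\leq_r$-comparable.) Strict versions $<_h,<_r$ denote the orders with equality excluded. *)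

theory Defs
  imports "HOL-Combinatorics.Permutations"
begin

text \<open>A permutation sigma of {1..n} is a function nat => nat with sigma permutes {1..n};
  the word is sigma(1) sigma(2) ... sigma(n). The double poset Psi_n(sigma) lives on {1..n}.\<close>

definition leq_h :: "(nat \<Rightarrow> nat) \<Rightarrow> nat \<Rightarrow> nat \<Rightarrow> bool" where
  "leq_h \<sigma> i j \<longleftrightarrow> i \<le> j \<and> inv \<sigma> i \<le> inv \<sigma> j"

definition leq_r :: "(nat \<Rightarrow> nat) \<Rightarrow> nat \<Rightarrow> nat \<Rightarrow> bool" where
  "leq_r \<sigma> i j \<longleftrightarrow> i \<le> j \<and> inv \<sigma> i \<ge> inv \<sigma> j"

definition less_h :: "(nat \<Rightarrow> nat) \<Rightarrow> nat \<Rightarrow> nat \<Rightarrow> bool" where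
  "less_h \<sigma> i j \<longleftrightarrow> leq_h \<sigma> i j \<and> i \<noteq> j"

definition less_r :: "(nat \<Rightarrow> nat) \<Rightarrow> nat \<Rightarrow> nat \<Rightarrow> bool" where
  "less_r \<sigma> i j \<longleftrightarrow> leq_r \<sigma> i j \<and> i \<noteq> j"

definition imm_followed :: "nat \<Rightarrow> (nat \<Rightarrow> nat) \<Rightarrow> nat \<Rightarrow> nat \<Rightarrow> bool" where
  "imm_followed n \<sigma> i j \<longleftrightarrow> (\<exists>k. 1 \<le> k \<and> k < n \<and> \<sigma> k = i \<and> \<sigma> (k + 1) = j)"

end

theory Submission
  imports Defs
begin

theorem lemma11:
  fixes n :: nat and \<sigma> :: "nat \<Rightarrow> nat" and i j :: nat
  assumes "\<sigma> permutes {1..n}"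
    and "1 \<le> i" and "i < j" and "j \<le> n"
  shows "imm_followed n \<sigma> i j \<longleftrightarrow>
           (less_h \<sigma> i j \<and>
            (\<forall>x\<in>{1..n}. less_h \<sigma> x j \<longrightarrow> leq_h \<sigma> x i \<or> leq_r \<sigma> i x) \<and>
            (\<forall>x\<in>{1..n}. less_h \<sigma> i x \<longrightarrow> leq_h \<sigma> j x \<or> leq_r \<sigma> x j))"
proof -
  note P = assms(1)
  have s1: "\<And>x. \<sigma> (inv \<sigma> x) = x" and s2: "\<And>x. inv \<sigma> (\<sigma> x) = x"
    using permutes_inverses[OF P] by auto
  have pinv: "inv \<sigma> permutes {1..n}" using permutes_inv[OF P] .
  have inimg: "\<And>x. x \<in> {1..n} \<Longrightarrow> inv \<sigma> x \<in> {1..n}"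
    using permutes_in_image[OF pinv] by blast
  have inimg2: "\<And>x. x \<in> {1..n} \<Longrightarrow> \<sigma> x \<in> {1..n}"
    using permutes_in_image[OF P] by blast
  have injp: "\<And>x y. inv \<sigma> x = inv \<sigma> y \<longleftrightarrow> x = y" using s1 by metis
  have iI: "i \<in> {1..n}" and jI: "j \<in> {1..n}" using assms by auto
  show ?thesis
  proof
    assume "imm_followed n \<sigma> i j"
    then obtain k where k: "1 \<le> k" "k < n" "\<sigma> k = i" "\<sigma> (k+1) = j"
      unfolding imm_followed_def by blast
    have pi: "inv \<sigma> i = k" using k s2 by metis
    have pj: "inv \<sigma> j = k+1" using k s2 by metis
    show "less_h \<sigma> i j \<and>
            (\<forall>x\<in>{1..n}. less_h \<sigma> x j \<longrightarrow> leq_h \<sigma> x i \<or> leq_r \<sigma> i x) \<and>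
            (\<forall>x\<in>{1..n}. less_h \<sigma> i x \<longrightarrow> leq_h \<sigma> j x \<or> leq_r \<sigma> x j)"
      unfolding less_h_def leq_h_def leq_r_def proof (intro conjI ballI impI)
      show "i \<le> j" "inv \<sigma> i \<le> inv \<sigma> j" "i \<noteq> j" using pi pj assms(3) by simp_all
    next
      fix x assume "(x \<le> j \<and> inv \<sigma> x \<le> inv \<sigma> j) \<and> x \<noteq> j"
      moreover have "inv \<sigma> x \<noteq> k+1" using \<open>_ \<and> x \<noteq> j\<close> pj injp by metis
      ultimately have "inv \<sigma> x \<le> k" using pj by simp
      thus "x \<le> i \<and> inv \<sigma> x \<le> inv \<sigma> i \<or> i \<le> x \<and> inv \<sigma> x \<le> inv \<sigma> i" using pi by auto
    next
      fix x assume "(i \<le> x \<and> inv \<sigma> i \<le> inv \<sigma> x) \<and> i \<noteq> x"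
      moreover have "inv \<sigma> x \<noteq> k" using \<open>_ \<and> i \<noteq> x\<close> pi injp by metis
      ultimately have "inv \<sigma> x \<ge> k+1" using pi by simp
      thus "j \<le> x \<and> inv \<sigma> j \<le> inv \<sigma> x \<or> x \<le> j \<and> inv \<sigma> j \<le> inv \<sigma> x" using pj by auto
    qed
  next
    assume H: "less_h \<sigma> i j \<and>
            (\<forall>x\<in>{1..n}. less_h \<sigma> x j \<longrightarrow> leq_h \<sigma> x i \<or> leq_r \<sigma> i x) \<and>
            (\<forall>x\<in>{1..n}. less_h \<sigma> i x \<longrightarrow> leq_h \<sigma> j x \<or> leq_r \<sigma> x j)"
    have lt: "inv \<sigma> i < inv \<sigma> j"
    proof -
      have "inv \<sigma> i \<le> inv \<sigma> j" using H unfolding less_h_def leq_h_def by auto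
      moreover have "inv \<sigma> i \<noteq> inv \<sigma> j" using s1 assms(3) by (metis less_irrefl)
      ultimately show ?thesis by simp
    qed
    have eq: "inv \<sigma> j = inv \<sigma> i + 1"
    proof (rule ccontr)
      assume "inv \<sigma> j \<noteq> inv \<sigma> i + 1"
      hence lt2: "inv \<sigma> i + 1 < inv \<sigma> j" using lt by simp
      define q where "q = inv \<sigma> i + 1"
      have qI: "q \<in> {1..n}" using inimg[OF jI] lt2 q_def by auto
      define x where "x = \<sigma> q"
      have xI: "x \<in> {1..n}" using inimg2[OF qI] x_def by simp
      have px: "inv \<sigma> x = q" using s2 x_def by simp
      have xj: "x \<noteq> j" using px lt2 q_def by auto
      show False
      proof (cases "x < j")
        case True
        have "less_h \<sigma> x j" unfolding less_h_def leq_h_def using True px lt2 q_def by auto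
        hence "leq_h \<sigma> x i \<or> leq_r \<sigma> i x" using H xI by blast
        thus False unfolding leq_h_def leq_r_def using px q_def by auto
      next
        case False
        hence "j < x" using xj by simp
        hence "less_h \<sigma> i x" unfolding less_h_def leq_h_def using assms(3) px q_def by auto
        hence "leq_h \<sigma> j x \<or> leq_r \<sigma> x j" using H xI by blast
        thus False unfolding leq_h_def leq_r_def using px q_def lt2 by auto
      qed
    qed
    show "imm_followed n \<sigma> i j" unfolding imm_followed_def
    proof (intro exI conjI)
      show "1 \<le> inv \<sigma> i" using inimg[OF iI] by auto
      show "inv \<sigma> i < n" using inimg[OF jI] eq by auto
      show "\<sigma> (inv \<sigma> i) = i" by (rule s1)
      show "\<sigma> (inv \<sigma> i + 1) = j" using s1 eq by metis
    qed
  qed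
qed

end
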